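(* Let $L$ be a number field, $\Gamma$ an order of $L$, $K\subseteq L$ a subfield with ring of integers $\mathcal O_K$ and $n=[L:K]$, and $\varphi:K\to L$ a ring morphism. Then there exists an injection $J_\varphi\hookrightarrow C_\Gamma$.
   Context: Fix a positive integer $z$ with $\varphi(z\mathcal O_K)\subseteq\Gamma$, let $\mathcal O'=\mathbb Z[z\mathcal O_K]$; via $\varphi|_{\mathcal O'}:\mathcal O'\to\Gamma$ each $\Gamma$-module $X$ becomes an $\mathcal O'$-module $X|_{\mathcal O'}$, and $\mathcal O_K^n|_{\mathcal O'}$ denotes $\mathcal O_K^n$ with $\mathcal O'$ acting by multiplication. $J_\varphi$ is the set of isomorphism classes of $\Gamma$-modules $X$ with $X|_{\mathcal O'}\cong\mathcal O_K^n|_{\mathcal O'}$. A fractional ideal of $\Gamma$ is a nonzero $\Gamma$-submodule $I\subseteq L$ with $xI\subseteq\Gamma$ for some nonzero $x\in L$; two are equivalent if $I'=xI$ for some nonzero $x\in L$; $C_\Gamma$ is the set of equivalence classes (a commutative monoid under ideal multiplication). *)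

theory Defs
  imports Complex_Main "HOL-Computational_Algebra.Polynomial"
begin

definition is_subring :: "complex set \<Rightarrow> bool" where
  "is_subring R \<longleftrightarrow> 1 \<in> R \<and> (\<forall>a\<in>R. \<forall>b\<in>R. a + b \<in> R \<and> a * b \<in> R) \<and> (\<forall>a\<in>R. - a \<in> R)"

definition is_subfield :: "complex set \<Rightarrow> bool" where
  "is_subfield K \<longleftrightarrow> is_subring K \<and> (\<forall>a\<in>K. a \<noteq> 0 \<longrightarrow> inverse a \<in> K)"

definition gen_subring :: "complex set \<Rightarrow> complex set" where
  "gen_subring S = \<Inter>{R. is_subring R \<and> S \<subseteq> R}"

definition span_over :: "complex set \<Rightarrow> complex set \<Rightarrow> complex set" where
  "span_over S B = {\<Sum>b\<in>B. c b * b | c. \<forall>b\<in>B. c b \<in> S}"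

definition basis_over :: "complex set \<Rightarrow> complex set \<Rightarrow> complex set \<Rightarrow> bool" where
  "basis_over K L B \<longleftrightarrow> finite B \<and> B \<subseteq> L \<and> L = span_over K B \<and>
     (\<forall>c. (\<forall>b\<in>B. c b \<in> K) \<and> (\<Sum>b\<in>B. c b * b) = 0 \<longrightarrow> (\<forall>b\<in>B. c b = 0))"

definition field_degree :: "complex set \<Rightarrow> complex set \<Rightarrow> nat \<Rightarrow> bool" where
  "field_degree K L n \<longleftrightarrow> (\<exists>B. basis_over K L B \<and> card B = n)"

definition number_field :: "complex set \<Rightarrow> bool" where
  "number_field L \<longleftrightarrow> is_subfield L \<and> (\<exists>d. field_degree \<rat> L d)"

definition is_order :: "complex set \<Rightarrow> complex set \<Rightarrow> bool" where
  "is_order \<Gamma> L \<longleftrightarrow> is_subring \<Gamma> \<and> \<Gamma> \<subseteq> L \<and>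
     (\<exists>B. finite B \<and> B \<subseteq> \<Gamma> \<and> \<Gamma> = span_over \<int> B) \<and>
     (\<exists>B. finite B \<and> B \<subseteq> \<Gamma> \<and> L = span_over \<rat> B)"

definition algebraic_integer :: "complex \<Rightarrow> bool" where
  "algebraic_integer x \<longleftrightarrow> (\<exists>p :: int poly. lead_coeff p = 1 \<and> poly (map_poly of_int p) x = 0)"

definition ring_of_integers :: "complex set \<Rightarrow> complex set" where
  "ring_of_integers K = {x \<in> K. algebraic_integer x}"

definition ring_morphism_on :: "complex set \<Rightarrow> complex set \<Rightarrow> (complex \<Rightarrow> complex) \<Rightarrow> bool" where
  "ring_morphism_on K L \<phi> \<longleftrightarrow> \<phi> ` K \<subseteq> L \<and> \<phi> 1 = 1 \<and>
     (\<forall>a\<in>K. \<forall>b\<in>K. \<phi> (a + b) = \<phi> a + \<phi> b \<and> \<phi> (a * b) = \<phi> a * \<phi> b)"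

record 'm cmod =
  mcarrier :: "'m set"
  madd :: "'m \<Rightarrow> 'm \<Rightarrow> 'm"
  mzero :: 'm
  msmul :: "complex \<Rightarrow> 'm \<Rightarrow> 'm"

definition is_module :: "complex set \<Rightarrow> ('m, 'e) cmod_scheme \<Rightarrow> bool" where
  "is_module R X \<longleftrightarrow>
     mzero X \<in> mcarrier X \<and>
     (\<forall>x\<in>mcarrier X. \<forall>y\<in>mcarrier X. madd X x y \<in> mcarrier X) \<and>
     (\<forall>x\<in>mcarrier X. \<forall>y\<in>mcarrier X. \<forall>w\<in>mcarrier X.
         madd X (madd X x y) w = madd X x (madd X y w)) \<and>
     (\<forall>x\<in>mcarrier X. \<forall>y\<in>mcarrier X. madd X x y = madd X y x) \<and>
     (\<forall>x\<in>mcarrier X. madd X (mzero X) x = x) \<and>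
     (\<forall>x\<in>mcarrier X. \<exists>y\<in>mcarrier X. madd X x y = mzero X) \<and>
     (\<forall>r\<in>R. \<forall>x\<in>mcarrier X. msmul X r x \<in> mcarrier X) \<and>
     (\<forall>r\<in>R. \<forall>x\<in>mcarrier X. \<forall>y\<in>mcarrier X.
         msmul X r (madd X x y) = madd X (msmul X r x) (msmul X r y)) \<and>
     (\<forall>r\<in>R. \<forall>s\<in>R. \<forall>x\<in>mcarrier X. msmul X (r + s) x = madd X (msmul X r x) (msmul X s x)) \<and>
     (\<forall>r\<in>R. \<forall>s\<in>R. \<forall>x\<in>mcarrier X. msmul X (r * s) x = msmul X r (msmul X s x)) \<and>
     (\<forall>x\<in>mcarrier X. msmul X 1 x = x)"

definition mod_iso :: "complex set \<Rightarrow> ('m, 'e) cmod_scheme \<Rightarrow> ('n, 'f) cmod_scheme \<Rightarrow> bool" where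
  "mod_iso R X Y \<longleftrightarrow> (\<exists>f. bij_betw f (mcarrier X) (mcarrier Y) \<and>
     (\<forall>x\<in>mcarrier X. \<forall>y\<in>mcarrier X. f (madd X x y) = madd Y (f x) (f y)) \<and>
     (\<forall>r\<in>R. \<forall>x\<in>mcarrier X. f (msmul X r x) = msmul Y r (f x)))"

definition restrict_scalars :: "(complex \<Rightarrow> complex) \<Rightarrow> 'm cmod \<Rightarrow> 'm cmod" where
  "restrict_scalars \<phi> X = X\<lparr>msmul := (\<lambda>a x. msmul X (\<phi> a) x)\<rparr>"

definition free_power :: "complex set \<Rightarrow> nat \<Rightarrow> (nat \<Rightarrow> complex) cmod" where
  "free_power Ri n = \<lparr>mcarrier = {v. (\<forall>i<n. v i \<in> Ri) \<and> (\<forall>i\<ge>n. v i = 0)},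
                     madd = (\<lambda>v w i. v i + w i), mzero = (\<lambda>i. 0),
                     msmul = (\<lambda>a v i. a * v i)\<rparr>"

text \<open>Representatives of \<open>J_\<phi>\<close> (with carriers in the type \<open>'m\<close>), for given
  \<open>K, \<phi>, \<Gamma>, n, z\<close>; \<open>O' = \<int>[z O_K]\<close>.\<close>
definition J_modules :: "complex set \<Rightarrow> (complex \<Rightarrow> complex) \<Rightarrow> complex set \<Rightarrow> nat \<Rightarrow> int \<Rightarrow> 'm cmod set" where
  "J_modules K \<phi> \<Gamma> n z =
     (let OK = ring_of_integers K; O' = gen_subring ((\<lambda>a. of_int z * a) ` OK) in
      {X. is_module \<Gamma> X \<and> mod_iso O' (restrict_scalars \<phi> X) (free_power OK n)})"

definition J_phi :: "complex set \<Rightarrow> (complex \<Rightarrow> complex) \<Rightarrow> complex set \<Rightarrow> nat \<Rightarrow> int \<Rightarrow> 'm cmod set set" where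
  "J_phi K \<phi> \<Gamma> n z = J_modules K \<phi> \<Gamma> n z //
     {(X, Y). X \<in> J_modules K \<phi> \<Gamma> n z \<and> Y \<in> J_modules K \<phi> \<Gamma> n z \<and> mod_iso \<Gamma> X Y}"

definition fractional_ideal :: "complex set \<Rightarrow> complex set \<Rightarrow> complex set \<Rightarrow> bool" where
  "fractional_ideal \<Gamma> L I \<longleftrightarrow> I \<subseteq> L \<and> I \<noteq> {0} \<and> 0 \<in> I \<and>
     (\<forall>a\<in>I. \<forall>b\<in>I. a + b \<in> I) \<and> (\<forall>g\<in>\<Gamma>. \<forall>a\<in>I. g * a \<in> I) \<and>
     (\<exists>x\<in>L. x \<noteq> 0 \<and> (\<lambda>a. x * a) ` I \<subseteq> \<Gamma>)"

definition C_Gamma :: "complex set \<Rightarrow> complex set \<Rightarrow> complex set set set" where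
  "C_Gamma \<Gamma> L = {I. fractional_ideal \<Gamma> L I} //
     {(I, I'). fractional_ideal \<Gamma> L I \<and> fractional_ideal \<Gamma> L I' \<and>
               (\<exists>x\<in>L. x \<noteq> 0 \<and> I' = (\<lambda>a. x * a) ` I)}"

end

theory Submission
  imports Defs "HOL-Library.Function_Algebras"
begin

lemma sum_fun_apply: "(sum f A) j = (\<Sum>x\<in>A. f x j)" for f :: "'a \<Rightarrow> 'b \<Rightarrow> 'c::comm_monoid_add"
  by (induction A rule: infinite_finite_induct) auto

lemma common_mult:
  assumes "finite A" "\<And>a. a \<in> A \<Longrightarrow> \<exists>N::int. N > 0 \<and> P a N"
    "\<And>a N k. P a N \<Longrightarrow> k > 0 \<Longrightarrow> P a (k * N)"
  shows "\<exists>N::int. N > 0 \<and> (\<forall>a\<in>A. P a N)"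
  using assms
proof (induction A rule: finite_induct)
  case empty
  then show ?case by (intro exI[of _ 1]) auto
next
  case (insert x F)
  then obtain N where N: "N > 0" "\<forall>a\<in>F. P a N" by blast
  obtain M where M: "M > 0" "P x M" using insert by blast
  have "P x (N * M)" using insert(5) M N by blast
  moreover have "\<forall>a\<in>F. P a (N * M)"
    using N M insert(5) by (metis mult.commute)
  ultimately show ?case using N M by (intro exI[of _ "N*M"]) auto
qed

lemma Rats_denom: assumes "(q::complex) \<in> \<rat>" shows "\<exists>N::int. N > 0 \<and> of_int N * q \<in> \<int>"
  using assms
proof (cases rule: Rats_cases')
  case (1 a b)
  then show ?thesis by (intro exI[of _ b]) auto
qed

lemma subring_0: "is_subring R \<Longrightarrow> 0 \<in> R"
  unfolding is_subring_def by (metis add.right_inverse)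

lemma subring_add: "is_subring R \<Longrightarrow> a \<in> R \<Longrightarrow> b \<in> R \<Longrightarrow> a + b \<in> R"
  and subring_mult: "is_subring R \<Longrightarrow> a \<in> R \<Longrightarrow> b \<in> R \<Longrightarrow> a * b \<in> R"
  and subring_uminus: "is_subring R \<Longrightarrow> a \<in> R \<Longrightarrow> - a \<in> R"
  and subring_1: "is_subring R \<Longrightarrow> 1 \<in> R"
  unfolding is_subring_def by auto

lemma subring_diff: "is_subring R \<Longrightarrow> a \<in> R \<Longrightarrow> b \<in> R \<Longrightarrow> a - b \<in> R"
  using subring_add subring_uminus by (metis diff_conv_add_uminus)

lemma subring_of_nat: "is_subring R \<Longrightarrow> of_nat k \<in> R"
  by (induction k) (auto intro: subring_0 subring_add subring_1)

lemma subring_of_int: assumes "is_subring R" shows "of_int k \<in> R"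
proof (cases "k \<ge> 0")
  case True
  then have "k = int (nat k)" by simp
  then have "(of_int k :: complex) = of_nat (nat k)" by (metis of_int_of_nat_eq)
  then show ?thesis using subring_of_nat by (metis assms)
next
  case False
  then have "k = - int (nat (- k))" by simp
  then have "(of_int k :: complex) = - of_nat (nat (-k))" by (metis of_int_minus of_int_of_nat_eq)
  then show ?thesis using subring_of_nat subring_uminus by (metis assms)
qed

lemma subring_sum: "is_subring R \<Longrightarrow> (\<And>x. x \<in> A \<Longrightarrow> f x \<in> R) \<Longrightarrow> sum f A \<in> R"
  by (induction A rule: infinite_finite_induct) (auto intro: subring_0 subring_add)

lemma subring_Ints: "is_subring R \<Longrightarrow> q \<in> \<int> \<Longrightarrow> a \<in> R \<Longrightarrow> q * a \<in> R"
  by (auto elim!: Ints_cases intro: subring_mult subring_of_int)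

lemma subfield_subring: "is_subfield K \<Longrightarrow> is_subring K"
  and subfield_inverse: "is_subfield K \<Longrightarrow> a \<in> K \<Longrightarrow> inverse a \<in> K"
  unfolding is_subfield_def by (auto simp: inverse_eq_divide)

lemma subfield_divide: "is_subfield K \<Longrightarrow> a \<in> K \<Longrightarrow> b \<in> K \<Longrightarrow> a / b \<in> K"
  by (simp add: divide_inverse subfield_inverse subring_mult subfield_subring)

lemma subfield_Rats: "is_subfield K \<Longrightarrow> q \<in> \<rat> \<Longrightarrow> q \<in> K"
  by (auto elim!: Rats_cases' intro!: subfield_divide subring_of_int subfield_subring)

lemma gen_subring_subring: "is_subring (gen_subring S)"
  unfolding gen_subring_def is_subring_def by auto

lemma gen_subring_base: "S \<subseteq> gen_subring S"
  unfolding gen_subring_def by auto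

lemma gen_subring_least: "is_subring R \<Longrightarrow> S \<subseteq> R \<Longrightarrow> gen_subring S \<subseteq> R"
  unfolding gen_subring_def by auto

lemma order_denom:
  assumes "is_order \<Gamma> L" "l \<in> L"
  shows "\<exists>N::int. N > 0 \<and> of_int N * l \<in> \<Gamma>"
proof -
  from assms(1) obtain B where B: "finite B" "B \<subseteq> \<Gamma>" "L = span_over \<rat> B" and G: "is_subring \<Gamma>"
    unfolding is_order_def by blast
  then obtain c where c: "\<forall>b\<in>B. c b \<in> \<rat>" "l = (\<Sum>b\<in>B. c b * b)"
    using assms(2) unfolding span_over_def by blast
  have "\<exists>N::int. N > 0 \<and> (\<forall>b\<in>B. of_int N * c b \<in> \<int>)"
    apply (rule common_mult[OF B(1)])
    using Rats_denom c(1) apply blast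
    by (metis Ints_mult Ints_of_int mult.assoc of_int_mult)
  then obtain N where N: "N > 0" "\<forall>b\<in>B. of_int N * c b \<in> \<int>" by blast
  have "of_int N * l = (\<Sum>b\<in>B. (of_int N * c b) * b)"
    by (simp add: c(2) sum_distrib_left mult.assoc)
  also have "\<dots> \<in> \<Gamma>"
    by (rule subring_sum[OF G]) (use N B in \<open>auto intro: subring_Ints[OF G]\<close>)
  finally show ?thesis using N by blast
qed

lemma morph_0: "ring_morphism_on K L \<phi> \<Longrightarrow> 0 \<in> K \<Longrightarrow> \<phi> 0 = 0"
  unfolding ring_morphism_on_def by (metis add.right_neutral add_left_imp_eq)

lemma morph:
  assumes "ring_morphism_on K L \<phi>" "is_subring K"
  shows "\<And>a b. a \<in> K \<Longrightarrow> b \<in> K \<Longrightarrow> \<phi> (a + b) = \<phi> a + \<phi> b"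
    "\<And>a b. a \<in> K \<Longrightarrow> b \<in> K \<Longrightarrow> \<phi> (a * b) = \<phi> a * \<phi> b"
    "\<phi> 1 = 1" "\<phi> 0 = 0"
    "\<And>a. a \<in> K \<Longrightarrow> \<phi> (- a) = - \<phi> a"
proof -
  show a: "\<And>a b. a \<in> K \<Longrightarrow> b \<in> K \<Longrightarrow> \<phi> (a + b) = \<phi> a + \<phi> b"
    "\<And>a b. a \<in> K \<Longrightarrow> b \<in> K \<Longrightarrow> \<phi> (a * b) = \<phi> a * \<phi> b" "\<phi> 1 = 1"
    using assms(1) unfolding ring_morphism_on_def by auto
  show z: "\<phi> 0 = 0" using morph_0 assms subring_0 by blast
  fix a assume "a \<in> K"
  then have "\<phi> (a + - a) = \<phi> a + \<phi> (- a)" using a subring_uminus assms by blast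
  then have "\<phi> a + \<phi> (- a) = 0" using z by simp
  then show "\<phi> (- a) = - \<phi> a" by (simp add: add_eq_0_iff)
qed

lemma morph_of_int:
  assumes "ring_morphism_on K L \<phi>" "is_subring K"
  shows "\<phi> (of_int k) = of_int k"
proof -
  have n: "\<phi> (of_nat m) = of_nat m" for m
    by (induction m) (auto simp: morph[OF assms] subring_of_nat[OF assms(2)] subring_1[OF assms(2)])
  show ?thesis
  proof (cases "k \<ge> 0")
    case True
    then have "(of_int k :: complex) = of_nat (nat k)" by (metis of_int_of_nat_eq int_nat_eq)
    then show ?thesis using n by simp
  next
    case False
    then have "(of_int k :: complex) = - of_nat (nat (-k))"
      by (metis of_int_minus of_int_of_nat_eq int_nat_eq neg_0_le_iff_le nle_le minus_minus)
    then show ?thesis using n morph(5)[OF assms] subring_of_nat[OF assms(2)] by simp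
  qed
qed

context vector_space begin
lemma fam_indep:
  assumes "finite A" "\<forall>c. (\<Sum>a\<in>A. c a *s W a) = 0 \<longrightarrow> (\<forall>a\<in>A. c a = 0)"
  shows "inj_on W A" "independent (W ` A)"
proof -
  show inj: "inj_on W A"
  proof (rule inj_onI, rule ccontr)
    fix a a' assume aa: "a \<in> A" "a' \<in> A" "W a = W a'" "a \<noteq> a'"
    define c where "c = (\<lambda>x. if x = a then 1 else if x = a' then -1 else (0::'a))"
    have pt: "c x *s W x = (if x = a then W x else 0) - (if x = a' then W x else 0)" for x
      using aa(4) unfolding c_def by (simp add: scale_minus_left)
    have "(\<Sum>x\<in>A. c x *s W x) = (\<Sum>x\<in>A. (if x = a then W x else 0)) - (\<Sum>x\<in>A. (if x = a' then W x else 0))"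
      unfolding pt by (rule sum_subtractf)
    also have "\<dots> = W a - W a'" using aa(1,2) assms(1) by (simp add: sum.delta)
    finally have "(\<Sum>x\<in>A. c x *s W x) = 0" using aa(3) by simp
    then have "c a = 0" using assms(2)[rule_format, of c] aa(1) by blast
    then show False by (simp add: c_def)
  qed
  show "independent (W ` A)"
  proof
    assume "dependent (W ` A)"
    then have "\<exists>u. (\<exists>v\<in>W ` A. u v \<noteq> 0) \<and> (\<Sum>v\<in>W ` A. u v *s v) = 0"
      using dependent_finite[OF finite_imageI[OF assms(1)]] by simp
    then obtain c where c: "\<exists>v\<in>W ` A. c v \<noteq> 0" "(\<Sum>v\<in>W ` A. c v *s v) = 0"
      by blast
    then have "(\<Sum>a\<in>A. c (W a) *s W a) = 0" by (simp add: sum.reindex[OF inj])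
    then have "\<forall>a\<in>A. c (W a) = 0" using assms(2)[rule_format, of "\<lambda>a. c (W a)"] by blast
    then show False using c(1) by auto
  qed
qed
end

interpretation VC: vector_space "\<lambda>(q::rat) (x::complex). of_rat q * x"
  by unfold_locales (auto simp: algebra_simps of_rat_add of_rat_mult)

interpretation VF: vector_space "\<lambda>(q::rat) (v::nat \<Rightarrow> complex). (\<lambda>j. of_rat q * v j)"
  by unfold_locales (auto simp: fun_eq_iff algebra_simps of_rat_add of_rat_mult)

declare VC.scale_scale[simp del] VF.scale_scale[simp del]

lemma mp1: "map_poly (of_int :: int \<Rightarrow> complex) [:a, 1:] = [:of_int a, 1:]"
  by (subst map_poly_pCons, simp, subst map_poly_pCons, simp_all)
lemma alg_int_0: "algebraic_integer 0"
  unfolding algebraic_integer_def by (intro exI[of _ "[:0,1:]"]) (simp only: mp1, simp)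
lemma alg_int_1: "algebraic_integer 1"
  unfolding algebraic_integer_def by (intro exI[of _ "[:-1,1:]"]) (simp only: mp1, simp)

locale setting =
  fixes L K \<Gamma> :: "complex set" and \<phi> :: "complex \<Rightarrow> complex" and n :: nat and z :: int
    and act :: "complex \<Rightarrow> (nat \<Rightarrow> complex) \<Rightarrow> (nat \<Rightarrow> complex)"
  assumes nf: "number_field L" and ord: "is_order \<Gamma> L" and sf: "is_subfield K" and KL: "K \<subseteq> L"
    and deg: "field_degree K L n" and mor: "ring_morphism_on K L \<phi>" and zpos: "z > 0"
    and phiz: "\<forall>a\<in>ring_of_integers K. \<phi> (of_int z * a) \<in> \<Gamma>"
    and M_add: "\<And>w w'. w \<in> mcarrier (free_power (ring_of_integers K) n) \<Longrightarrow>
        w' \<in> mcarrier (free_power (ring_of_integers K) n) \<Longrightarrow> w + w' \<in> mcarrier (free_power (ring_of_integers K) n)"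
    and act_closed: "\<And>\<gamma> w. \<gamma> \<in> \<Gamma> \<Longrightarrow> w \<in> mcarrier (free_power (ring_of_integers K) n) \<Longrightarrow>
        act \<gamma> w \<in> mcarrier (free_power (ring_of_integers K) n)"
    and act_add: "\<And>\<gamma> w w'. \<gamma> \<in> \<Gamma> \<Longrightarrow> w \<in> mcarrier (free_power (ring_of_integers K) n) \<Longrightarrow>
        w' \<in> mcarrier (free_power (ring_of_integers K) n) \<Longrightarrow> act \<gamma> (w + w') = act \<gamma> w + act \<gamma> w'"
    and act_addl: "\<And>\<gamma> \<delta> w. \<gamma> \<in> \<Gamma> \<Longrightarrow> \<delta> \<in> \<Gamma> \<Longrightarrow> w \<in> mcarrier (free_power (ring_of_integers K) n) \<Longrightarrow>
        act (\<gamma> + \<delta>) w = act \<gamma> w + act \<delta> w"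
    and act_mult: "\<And>\<gamma> \<delta> w. \<gamma> \<in> \<Gamma> \<Longrightarrow> \<delta> \<in> \<Gamma> \<Longrightarrow> w \<in> mcarrier (free_power (ring_of_integers K) n) \<Longrightarrow>
        act (\<gamma> * \<delta>) w = act \<gamma> (act \<delta> w)"
    and act_O': "\<And>r w. r \<in> gen_subring ((\<lambda>a. of_int z * a) ` ring_of_integers K) \<Longrightarrow>
        w \<in> mcarrier (free_power (ring_of_integers K) n) \<Longrightarrow> act (\<phi> r) w = (\<lambda>i. r * w i)"
begin

abbreviation "OK \<equiv> ring_of_integers K"
abbreviation "O' \<equiv> gen_subring ((\<lambda>a. of_int z * a) ` ring_of_integers K)"
abbreviation "M \<equiv> mcarrier (free_power (ring_of_integers K) n)"

definition e :: "nat \<Rightarrow> nat \<Rightarrow> complex" where "e t = (\<lambda>j. if j = t then 1 else 0)"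

lemma M_mem: "w \<in> M \<longleftrightarrow> (\<forall>i<n. w i \<in> OK) \<and> (\<forall>i\<ge>n. w i = 0)"
  by (simp add: free_power_def)

lemma Gsub: "is_subring \<Gamma>" and GL: "\<Gamma> \<subseteq> L"
  using ord unfolding is_order_def by auto

lemma Lsf: "is_subfield L" using nf unfolding number_field_def by auto

lemma Ksr: "is_subring K" using sf subfield_subring by blast

lemma OK_K: "OK \<subseteq> K" unfolding ring_of_integers_def by auto

lemma OK_0: "0 \<in> OK" and OK_1: "1 \<in> OK"
  unfolding ring_of_integers_def using alg_int_0 alg_int_1 subring_0[OF Ksr] subring_1[OF Ksr] by auto

lemma zero_M: "0 \<in> M" by (simp add: M_mem OK_0)

lemma e_M: "t < n \<Longrightarrow> e t \<in> M" by (auto simp: M_mem e_def OK_0 OK_1)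

lemma e_nz: "e t \<noteq> 0" by (auto simp: e_def fun_eq_iff)

lemma O'_K: "O' \<subseteq> K"
  by (rule gen_subring_least[OF Ksr]) (use OK_K subring_mult[OF Ksr] subring_of_int[OF Ksr] in auto)

lemma O'_gen: "a \<in> OK \<Longrightarrow> of_int z * a \<in> O'"
  using gen_subring_base by blast

lemma O'_int: "of_int k \<in> O'"
  using subring_of_int[OF gen_subring_subring] .

lemma O'_phi: "r \<in> O' \<Longrightarrow> \<phi> r \<in> \<Gamma>"
proof -
  have "is_subring {a \<in> K. \<phi> a \<in> \<Gamma>}"
    unfolding is_subring_def
    using morph[OF mor Ksr] subring_add[OF Ksr] subring_mult[OF Ksr] subring_uminus[OF Ksr] subring_1[OF Ksr]
      subring_add[OF Gsub] subring_mult[OF Gsub] subring_uminus[OF Gsub] subring_1[OF Gsub] by auto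
  moreover have "(\<lambda>a. of_int z * a) ` OK \<subseteq> {a \<in> K. \<phi> a \<in> \<Gamma>}"
    using phiz OK_K subring_mult[OF Ksr] subring_of_int[OF Ksr] by auto
  ultimately show "r \<in> O' \<Longrightarrow> \<phi> r \<in> \<Gamma>" using gen_subring_least by blast
qed

lemma G_int: "of_int k \<in> \<Gamma>" using subring_of_int[OF Gsub] .

lemma act_int: "w \<in> M \<Longrightarrow> act (of_int k) w = (\<lambda>i. of_int k * w i)"
  using act_O'[OF O'_int, of w k] morph_of_int[OF mor Ksr] by simp

lemma act_one: "w \<in> M \<Longrightarrow> act 1 w = w"
  using act_int[of w 1] by simp

lemma act_zero_vec: assumes "\<gamma> \<in> \<Gamma>" shows "act \<gamma> 0 = 0"
proof -
  have "act \<gamma> (0 + 0) = act \<gamma> 0 + act \<gamma> 0" using act_add[OF assms zero_M zero_M] .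
  then show ?thesis by simp
qed

lemma act_zero_sc: "w \<in> M \<Longrightarrow> act 0 w = 0"
  using act_int[of w 0] by (simp add: fun_eq_iff)

lemma act_uminus: assumes "\<gamma> \<in> \<Gamma>" "w \<in> M" shows "act (- \<gamma>) w = - act \<gamma> w"
proof -
  have "act (\<gamma> + - \<gamma>) w = act \<gamma> w + act (- \<gamma>) w"
    using act_addl[OF assms(1) subring_uminus[OF Gsub assms(1)] assms(2)] .
  then have "act \<gamma> w + act (- \<gamma>) w = 0" using act_zero_sc[OF assms(2)] by simp
  then show ?thesis by (simp add: add_eq_0_iff)
qed

lemma act_diff: assumes "\<gamma> \<in> \<Gamma>" "\<delta> \<in> \<Gamma>" "w \<in> M" shows "act (\<gamma> - \<delta>) w = act \<gamma> w - act \<delta> w"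
  using act_addl[OF assms(1) subring_uminus[OF Gsub assms(2)] assms(3)] act_uminus[OF assms(2,3)]
  by simp

lemma act_sum: assumes "w \<in> M" "\<And>s. s \<in> S \<Longrightarrow> f s \<in> \<Gamma>"
  shows "act (sum f S) w = (\<Sum>s\<in>S. act (f s) w)"
  using assms(2)
proof (induction S rule: infinite_finite_induct)
  case (infinite A) then show ?case using act_zero_sc[OF assms(1)] by simp
next
  case empty then show ?case using act_zero_sc[OF assms(1)] by simp
next
  case (insert x F)
  have "sum f F \<in> \<Gamma>" using insert subring_sum[OF Gsub] by blast
  then show ?case using insert act_addl[OF _ _ assms(1)] by simp
qed

lemma act_comm_int: assumes "\<gamma> \<in> \<Gamma>" "w \<in> M"
  shows "act \<gamma> (\<lambda>i. of_int k * w i) = (\<lambda>i. of_int k * act \<gamma> w i)"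
proof -
  have "act \<gamma> (\<lambda>i. of_int k * w i) = act \<gamma> (act (of_int k) w)" using act_int[OF assms(2)] by simp
  also have "\<dots> = act (\<gamma> * of_int k) w" using act_mult[OF assms(1) G_int assms(2)] by simp
  also have "\<dots> = act (of_int k) (act \<gamma> w)" using act_mult[OF G_int assms(1) assms(2)] by (simp add: mult.commute)
  also have "\<dots> = (\<lambda>i. of_int k * act \<gamma> w i)" using act_int act_closed assms by blast
  finally show ?thesis .
qed

lemma torsion: assumes "\<delta> \<in> \<Gamma>" "\<delta> \<noteq> 0" "w \<in> M" "act \<delta> w = 0" shows "w = 0"
proof -
  have "inverse \<delta> \<in> L" using subfield_inverse[OF Lsf] GL assms(1) by blast
  then obtain N :: int where N: "N > 0" "of_int N * inverse \<delta> \<in> \<Gamma>" using order_denom[OF ord] by blast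
  have "of_int N * inverse \<delta> * \<delta> = of_int N" using assms(2) by (simp add: field_simps)
  then have "act (of_int N) w = act ((of_int N * inverse \<delta>) * \<delta>) w" by (simp only:)
  also have "\<dots> = 0" using act_mult[OF N(2) assms(1,3)] assms(4) act_zero_vec[OF N(2)] by simp
  finally have "(\<lambda>i. of_int N * w i) = 0" using act_int[OF assms(3)] by simp
  then show ?thesis using N by (auto simp: fun_eq_iff)
qed

lemma act_inj: assumes "\<gamma> \<in> \<Gamma>" "\<delta> \<in> \<Gamma>" "w \<in> M" "w \<noteq> 0" "act \<gamma> w = act \<delta> w" shows "\<gamma> = \<delta>"
proof (rule ccontr)
  assume "\<gamma> \<noteq> \<delta>"
  moreover have "act (\<gamma> - \<delta>) w = 0" using act_diff[OF assms(1-3)] assms(5) by simp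
  ultimately show False using torsion[OF subring_diff[OF Gsub assms(1,2)] _ assms(3)] assms(4) by simp
qed

end

lemma span_over_empty: "span_over S {} = {0}"
  unfolding span_over_def by auto

lemma spanQ_VC: assumes "finite B" shows "span_over \<rat> B \<subseteq> VC.span B"
proof
  fix x assume "x \<in> span_over \<rat> B"
  then obtain c where c: "\<forall>b\<in>B. c b \<in> \<rat>" "x = (\<Sum>b\<in>B. c b * b)" unfolding span_over_def by blast
  have *: "c b * b \<in> VC.span B" if "b \<in> B" for b
  proof -
    have "c b \<in> \<rat>" using c(1) that by simp
    then obtain r where "c b = of_rat r" by (erule Rats_cases)
    then show ?thesis using VC.span_scale[OF VC.span_base[OF that], of r] by simp
  qed
  show "x \<in> VC.span B" unfolding c(2) by (rule VC.span_sum) (rule *)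
qed

context setting begin

lemma basisK: obtains BK where "finite BK" "BK \<subseteq> L" "L = span_over K BK" "card BK = n"
  "\<And>c. (\<forall>b\<in>BK. c b \<in> K) \<Longrightarrow> (\<Sum>b\<in>BK. c b * b) = 0 \<Longrightarrow> \<forall>b\<in>BK. c b = 0"
  using deg unfolding field_degree_def basis_over_def by blast

lemma one_L: "1 \<in> L" using subring_1 subfield_subring Lsf by blast

lemma n_pos: "n > 0"
proof -
  obtain BK where BK: "finite BK" "L = span_over K BK" "card BK = n" using basisK by metis
  have "BK \<noteq> {}" using BK(2) one_L span_over_empty by auto
  then show ?thesis using BK by auto
qed

lemma basisQ: obtains E where "finite E" "E \<subseteq> K" "E \<noteq> {}" "K \<subseteq> VC.span E"
  "\<And>u. (\<Sum>\<kappa>\<in>E. of_rat (u \<kappa>) * \<kappa>) = 0 \<Longrightarrow> \<forall>\<kappa>\<in>E. u \<kappa> = 0"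
proof -
  obtain B0 d where B0: "basis_over \<rat> L B0" using nf unfolding number_field_def field_degree_def by blast
  then have fB0: "finite B0" and LB0: "L \<subseteq> VC.span B0"
    using spanQ_VC unfolding basis_over_def by auto
  obtain E where E: "E \<subseteq> K" "VC.independent E" "K \<subseteq> VC.span E"
    using VC.basis_exists by metis
  have fE: "finite E" using VC.independent_span_bound[OF fB0 E(2)] E(1) KL LB0 by blast
  have "E \<noteq> {}" using E(3) subring_1[OF Ksr] VC.span_empty by auto
  moreover have nd: "\<not> (\<exists>u. (\<exists>v\<in>E. u v \<noteq> 0) \<and> (\<Sum>v\<in>E. of_rat (u v) * v) = 0)"
    using E(2) VC.dependent_finite[OF fE] by simp
  have "\<forall>\<kappa>\<in>E. u \<kappa> = 0" if "(\<Sum>\<kappa>\<in>E. of_rat (u \<kappa>) * \<kappa>) = 0" for u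
    using nd that by blast
  ultimately show ?thesis using that[OF fE E(1) _ E(3)] by blast
qed

lemma K_expand: assumes "K \<subseteq> VC.span E" "finite E" "x \<in> K"
  shows "\<exists>u. x = (\<Sum>\<kappa>\<in>E. of_rat (u \<kappa>) * \<kappa>)"
  using assms VC.span_finite[OF assms(2)] by auto

lemma M_expand: assumes "w \<in> M"
  shows "w = (\<Sum>t<n. (\<lambda>j. if j = t then w t else 0))"
proof
  fix j
  show "w j = (\<Sum>t<n. (\<lambda>j. if j = t then w t else 0)) j"
    unfolding sum_fun_apply using assms by (auto simp: M_mem sum.delta')
qed

end

context setting begin

lemma F_indep:
  assumes BK: "finite BK" "\<And>c. (\<forall>b\<in>BK. c b \<in> K) \<Longrightarrow> (\<Sum>b\<in>BK. c b * b) = 0 \<Longrightarrow> \<forall>b\<in>BK. c b = 0"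
    and E: "finite E" "E \<subseteq> K" "\<And>u. (\<Sum>\<kappa>\<in>E. of_rat (u \<kappa>) * \<kappa>) = 0 \<Longrightarrow> \<forall>\<kappa>\<in>E. u \<kappa> = 0"
    and s: "(\<Sum>p\<in>BK \<times> E. of_rat (u p) * (fst p * snd p)) = 0"
  shows "\<forall>p\<in>BK \<times> E. u p = 0"
proof -
  have "(\<Sum>p\<in>BK \<times> E. of_rat (u p) * (fst p * snd p)) = (\<Sum>b\<in>BK. \<Sum>\<kappa>\<in>E. of_rat (u (b, \<kappa>)) * (b * \<kappa>))"
    by (simp add: sum.cartesian_product split_def)
  also have "\<dots> = (\<Sum>b\<in>BK. (\<Sum>\<kappa>\<in>E. of_rat (u (b, \<kappa>)) * \<kappa>) * b)"
    by (simp add: sum_distrib_right sum_distrib_left mult_ac)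
  finally have s2: "(\<Sum>b\<in>BK. (\<Sum>\<kappa>\<in>E. of_rat (u (b, \<kappa>)) * \<kappa>) * b) = 0" using s by simp
  have inK: "\<forall>b\<in>BK. (\<Sum>\<kappa>\<in>E. of_rat (u (b, \<kappa>)) * \<kappa>) \<in> K"
  proof
    fix b
    show "(\<Sum>\<kappa>\<in>E. of_rat (u (b, \<kappa>)) * \<kappa>) \<in> K"
    proof (rule subring_sum[OF Ksr])
      fix \<kappa> assume "\<kappa> \<in> E"
      then show "of_rat (u (b, \<kappa>)) * \<kappa> \<in> K"
        using E(2) subring_mult[OF Ksr] subfield_Rats[OF sf] Rats_of_rat by blast
    qed
  qed
  have z: "\<forall>b\<in>BK. (\<Sum>\<kappa>\<in>E. of_rat (u (b, \<kappa>)) * \<kappa>) = 0"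
    using BK(2)[OF inK s2] .
  show ?thesis
  proof (clarify)
    fix b \<kappa> assume "b \<in> BK" "\<kappa> \<in> E"
    then show "u (b, \<kappa>) = 0" using E(3)[of "\<lambda>\<kappa>. u (b, \<kappa>)"] z by blast
  qed
qed

lemma M_span:
  assumes E: "finite E" "K \<subseteq> VC.span E" and w: "w \<in> M"
  shows "w \<in> VF.span ((\<lambda>(t, \<kappa>). (\<lambda>j. if j = t then \<kappa> else 0)) ` ({..<n} \<times> E))"
    (is "_ \<in> VF.span ?C")
proof -
  have "(\<lambda>j. if j = t then w t else 0) \<in> VF.span ?C" if t: "t < n" for t
  proof -
    have "w t \<in> K" using w t OK_K by (auto simp: M_mem)
    then obtain u where u: "w t = (\<Sum>\<kappa>\<in>E. of_rat (u \<kappa>) * \<kappa>)" using K_expand[OF E(2,1)] by blast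
    have eq: "(\<lambda>j. if j = t then w t else 0) = (\<Sum>\<kappa>\<in>E. (\<lambda>j. of_rat (u \<kappa>) * (if j = t then \<kappa> else 0)))"
    proof
      fix j show "(if j = t then w t else 0) = (\<Sum>\<kappa>\<in>E. (\<lambda>j. of_rat (u \<kappa>) * (if j = t then \<kappa> else 0))) j"
        unfolding sum_fun_apply u by auto
    qed
    have "(\<lambda>j. of_rat (u \<kappa>) * (if j = t then \<kappa> else 0)) \<in> VF.span ?C" if "\<kappa> \<in> E" for \<kappa>
    proof -
      have "(\<lambda>j. if j = t then \<kappa> else 0) \<in> ?C" using that t by force
      from VF.span_scale[OF VF.span_base[OF this], of "u \<kappa>"] show ?thesis .
    qed
    then show ?thesis unfolding eq by (intro VF.span_sum)
  qed
  then have "(\<Sum>t<n. (\<lambda>j. if j = t then w t else 0)) \<in> VF.span ?C" by (intro VF.span_sum) simp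
  then show ?thesis using M_expand[OF w] by simp
qed

end

context setting begin

lemma Lsr: "is_subring L" using Lsf subfield_subring by blast

lemma dep:
  assumes i: "i < n"
  shows "\<exists>\<gamma>\<in>\<Gamma>. \<exists>\<delta>\<in>\<Gamma>. (\<gamma> \<noteq> 0 \<or> \<delta> \<noteq> 0) \<and> act \<gamma> (e 0) = act \<delta> (e i)"
proof -
  obtain BK where BK: "finite BK" "BK \<subseteq> L" "L = span_over K BK" "card BK = n"
    "\<And>c. (\<forall>b\<in>BK. c b \<in> K) \<Longrightarrow> (\<Sum>b\<in>BK. c b * b) = 0 \<Longrightarrow> \<forall>b\<in>BK. c b = 0"
    by (rule basisK) blast
  obtain E where E: "finite E" "E \<subseteq> K" "E \<noteq> {}" "K \<subseteq> VC.span E"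
    "\<And>u. (\<Sum>\<kappa>\<in>E. of_rat (u \<kappa>) * \<kappa>) = 0 \<Longrightarrow> \<forall>\<kappa>\<in>E. u \<kappa> = 0"
    by (rule basisQ) blast
  define F where "F p = fst p * snd p" for p :: "complex \<times> complex"
  have FL: "F p \<in> L" if "p \<in> BK \<times> E" for p
    using that BK(2) E(2) KL subring_mult[OF Lsr] unfolding F_def by (auto simp: subset_iff)
  have fS: "finite (BK \<times> E)" using BK(1) E(1) by simp
  obtain N0 :: int where N0: "N0 > 0" "\<forall>p\<in>BK \<times> E. of_int N0 * F p \<in> \<Gamma>"
  proof -
    have "\<exists>N::int. N > 0 \<and> (\<forall>p\<in>BK \<times> E. of_int N * F p \<in> \<Gamma>)"
    proof (rule common_mult[OF fS])
      fix p assume "p \<in> BK \<times> E"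
      then show "\<exists>N::int. N > 0 \<and> of_int N * F p \<in> \<Gamma>" using order_denom[OF ord FL] by blast
    next
      fix p N and k :: int assume "of_int N * F p \<in> \<Gamma>" "k > 0"
      then have "of_int k * (of_int N * F p) \<in> \<Gamma>" using subring_mult[OF Gsub G_int] by blast
      then show "of_int (k * N) * F p \<in> \<Gamma>" by (simp add: mult.assoc)
    qed
    then show ?thesis using that by blast
  qed
  define g where "g p = of_int N0 * F p" for p
  have gG: "g p \<in> \<Gamma>" if "p \<in> BK \<times> E" for p using N0 that unfolding g_def by blast
  define A where "A = (BK \<times> E) \<times> (UNIV :: bool set)"
  have fA: "finite A" unfolding A_def using fS by simp
  define ee where "ee t = (if t then e i else e 0)" for t
  have eeM: "ee t \<in> M" for t unfolding ee_def using e_M i n_pos by auto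
  define W where "W a = act (g (fst a)) (ee (snd a))" for a
  have WM: "W a \<in> M" if "a \<in> A" for a
    using that act_closed[OF gG eeM] unfolding W_def A_def by auto
  define Cs where "Cs = (\<lambda>(t, \<kappa>). (\<lambda>j. if j = t then \<kappa> else (0::complex))) ` ({..<n} \<times> E)"
  have WC: "W ` A \<subseteq> VF.span Cs" using M_span[OF E(1) E(4) WM] unfolding Cs_def by blast
  have fC: "finite Cs" unfolding Cs_def using E(1) by simp
  have cardA: "card A = n * card E * 2"
    unfolding A_def using BK(4) by (simp add: card_cartesian_product)
  have cardC: "card Cs \<le> n * card E"
    unfolding Cs_def using card_image_le[of "{..<n} \<times> E"] E(1) by (simp add: card_cartesian_product)
  have cardE: "card E > 0" using E(1,3) by (simp add: card_gt_0_iff)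
  have notind: "\<not> (\<forall>c. (\<Sum>a\<in>A. (\<lambda>j. of_rat (c a) * W a j)) = 0 \<longrightarrow> (\<forall>a\<in>A. c a = 0))"
  proof
    assume H: "\<forall>c. (\<Sum>a\<in>A. (\<lambda>j. of_rat (c a) * W a j)) = 0 \<longrightarrow> (\<forall>a\<in>A. c a = 0)"
    have inj: "inj_on W A" and ind: "VF.independent (W ` A)" using VF.fam_indep[OF fA H] by auto
    have "card (W ` A) \<le> card Cs" using VF.independent_span_bound[OF fC ind WC] by simp
    then have "card A \<le> n * card E" using card_image[OF inj] cardC by simp
    then show False using cardA n_pos cardE by simp
  qed
  then obtain c a0 where c: "(\<Sum>a\<in>A. (\<lambda>j. of_rat (c a) * W a j)) = 0" "a0 \<in> A" "c a0 \<noteq> 0"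
    by blast
  obtain D :: int where D: "D > 0" "\<forall>a\<in>A. \<exists>k::int. of_int D * c a = of_int k"
  proof -
    have "\<exists>N::int. N > 0 \<and> (\<forall>a\<in>A. \<exists>k::int. of_int N * c a = of_int k)"
    proof (rule common_mult[OF fA])
      fix a
      have "(of_rat (c a) :: complex) \<in> \<rat>" by simp
      then obtain N :: int where N: "N > 0" "of_int N * (of_rat (c a) :: complex) \<in> \<int>"
        using Rats_denom by blast
      then obtain k where "of_int N * (of_rat (c a) :: complex) = of_int k" by (auto elim: Ints_cases)
      then have "(of_rat (of_int N * c a) :: complex) = of_rat (of_int k)" by (simp add: of_rat_mult)
      then have "of_int N * c a = of_int k" by (simp only: of_rat_eq_iff)
      then show "\<exists>N::int. N > 0 \<and> (\<exists>k::int. of_int N * c a = of_int k)" using N by blast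
    next
      fix a N and k :: int assume "\<exists>m::int. of_int N * c a = of_int m" "k > 0"
      then obtain m :: int where "of_int N * c a = of_int m" by blast
      then have "of_int (k * N) * c a = of_int (k * m)" by (simp add: mult.assoc)
      then show "\<exists>m::int. of_int (k * N) * c a = of_int m" by blast
    qed
    then show ?thesis using that by blast
  qed
  define \<alpha> where "\<alpha> a = (SOME k::int. of_int D * c a = of_int k)" for a
  have \<alpha>: "of_int D * c a = of_int (\<alpha> a)" if "a \<in> A" for a
    using someI_ex[OF D(2)[rule_format, OF that]] unfolding \<alpha>_def .
  have sum2: "(\<Sum>a\<in>A. act (of_int (\<alpha> a) * g (fst a)) (ee (snd a))) = 0"
  proof -
    have "(\<Sum>a\<in>A. act (of_int (\<alpha> a) * g (fst a)) (ee (snd a))) = (\<Sum>a\<in>A. (\<lambda>j. of_int (\<alpha> a) * W a j))"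
    proof (rule sum.cong[OF refl])
      fix a assume a: "a \<in> A"
      then have "fst a \<in> BK \<times> E" unfolding A_def by auto
      then have "act (of_int (\<alpha> a) * g (fst a)) (ee (snd a)) = act (of_int (\<alpha> a)) (W a)"
        unfolding W_def using act_mult[OF G_int gG eeM] by simp
      also have "\<dots> = (\<lambda>j. of_int (\<alpha> a) * W a j)" using act_int[OF WM[OF a]] .
      finally show "act (of_int (\<alpha> a) * g (fst a)) (ee (snd a)) = (\<lambda>j. of_int (\<alpha> a) * W a j)" .
    qed
    also have "\<dots> = 0"
    proof
      fix j
      have "(\<Sum>a\<in>A. (\<lambda>j. of_int (\<alpha> a) * W a j)) j = (\<Sum>a\<in>A. of_int D * (of_rat (c a) * W a j))"
        unfolding sum_fun_apply
      proof (rule sum.cong[OF refl])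
        fix a assume a: "a \<in> A"
        have "(of_int (\<alpha> a) :: complex) = of_rat (of_int (\<alpha> a))" by simp
        also have "\<dots> = of_rat (of_int D * c a)" using \<alpha>[OF a] by simp
        also have "\<dots> = of_int D * of_rat (c a)" by (simp add: of_rat_mult)
        finally show "of_int (\<alpha> a) * W a j = of_int D * (of_rat (c a) * W a j)" by (simp add: mult.assoc)
      qed
      also have "\<dots> = of_int D * (\<Sum>a\<in>A. (\<lambda>j. of_rat (c a) * W a j)) j"
        unfolding sum_fun_apply by (simp add: sum_distrib_left)
      also have "\<dots> = 0" using c(1) by simp
      finally show "(\<Sum>a\<in>A. (\<lambda>j. of_int (\<alpha> a) * W a j)) j = 0 j" by simp
    qed
    finally show ?thesis .
  qed
  define \<gamma> where "\<gamma> = (\<Sum>p\<in>BK \<times> E. of_int (\<alpha> (p, False)) * g p)"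
  define \<delta> where "\<delta> = (\<Sum>p\<in>BK \<times> E. of_int (\<alpha> (p, True)) * g p)"
  have \<gamma>G: "\<gamma> \<in> \<Gamma>" unfolding \<gamma>_def
    by (rule subring_sum[OF Gsub]) (use subring_mult[OF Gsub G_int gG] in blast)
  have \<delta>G: "\<delta> \<in> \<Gamma>" unfolding \<delta>_def
    by (rule subring_sum[OF Gsub]) (use subring_mult[OF Gsub G_int gG] in blast)
  have "(\<Sum>a\<in>A. act (of_int (\<alpha> a) * g (fst a)) (ee (snd a))) =
      (\<Sum>p\<in>BK \<times> E. act (of_int (\<alpha> (p, False)) * g p) (e 0) + act (of_int (\<alpha> (p, True)) * g p) (e i))"
  proof -
    have "(\<Sum>a\<in>A. act (of_int (\<alpha> a) * g (fst a)) (ee (snd a))) =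
      (\<Sum>p\<in>BK \<times> E. \<Sum>t\<in>(UNIV::bool set). act (of_int (\<alpha> (p, t)) * g p) (ee t))"
      unfolding A_def sum.cartesian_product by (simp add: split_def)
    then show ?thesis by (simp add: UNIV_bool ee_def add.commute)
  qed
  also have "\<dots> = act \<gamma> (e 0) + act \<delta> (e i)"
    unfolding \<gamma>_def \<delta>_def sum.distrib
    using act_sum[OF e_M[OF n_pos], of "BK \<times> E" "\<lambda>p. of_int (\<alpha> (p, False)) * g p"]
      act_sum[OF e_M[OF i], of "BK \<times> E" "\<lambda>p. of_int (\<alpha> (p, True)) * g p"]
      subring_mult[OF Gsub G_int gG] by simp
  finally have "act \<gamma> (e 0) + act \<delta> (e i) = 0" using sum2 by simp
  then have eq: "act \<gamma> (e 0) = act (- \<delta>) (e i)"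
    using act_uminus[OF \<delta>G e_M[OF i]] by (simp add: add_eq_0_iff2)
  have zero_coeffs: "\<forall>p\<in>BK \<times> E. c (p, t) = 0" if "(\<Sum>p\<in>BK \<times> E. of_int (\<alpha> (p, t)) * g p) = 0" for t
  proof -
    have "(\<Sum>p\<in>BK \<times> E. of_rat (of_int (\<alpha> (p, t) * N0)) * (fst p * snd p)) = 0"
      using that unfolding g_def F_def by (simp add: mult.assoc of_rat_mult)
    from F_indep[OF BK(1) BK(5) E(1) E(2) E(5) this]
    have a0: "\<forall>p\<in>BK \<times> E. \<alpha> (p, t) = 0" using N0(1) by simp
    show ?thesis
    proof
      fix p assume p: "p \<in> BK \<times> E"
      have pA: "(p, t) \<in> A" unfolding A_def using p by simp
      have "of_int D * c (p, t) = 0" using \<alpha>[OF pA] a0 p by simp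
      then show "c (p, t) = 0" using D(1) by simp
    qed
  qed
  have "\<gamma> \<noteq> 0 \<or> - \<delta> \<noteq> 0"
  proof (rule ccontr)
    assume "\<not> (\<gamma> \<noteq> 0 \<or> - \<delta> \<noteq> 0)"
    then have "\<gamma> = 0" "\<delta> = 0" by auto
    then have "\<forall>p\<in>BK \<times> E. c (p, False) = 0" "\<forall>p\<in>BK \<times> E. c (p, True) = 0"
      using zero_coeffs unfolding \<gamma>_def \<delta>_def by auto
    moreover obtain p t where pt: "a0 = (p, t)" "p \<in> BK \<times> E" using c(2) unfolding A_def by auto
    ultimately have "c a0 = 0" by (cases t) auto
    then show False using c(3) by simp
  qed
  then show ?thesis using \<gamma>G subring_uminus[OF Gsub \<delta>G] eq by blast
qed

end

context setting begin

lemma K1: assumes i: "i < n"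
  shows "\<exists>N::int. N > 0 \<and> (\<exists>\<gamma>\<in>\<Gamma>. (\<lambda>j. of_int N * e i j) = act \<gamma> (e 0))"
proof (cases "i = 0")
  case True
  have "\<exists>\<gamma>\<in>\<Gamma>. e 0 = act \<gamma> (e 0)" using act_one[OF e_M[OF n_pos]] subring_1[OF Gsub] by metis
  then show ?thesis using True by (intro exI[of _ 1]) simp
next
  case False
  obtain \<gamma> \<delta> where gd: "\<gamma> \<in> \<Gamma>" "\<delta> \<in> \<Gamma>" "\<gamma> \<noteq> 0 \<or> \<delta> \<noteq> 0" "act \<gamma> (e 0) = act \<delta> (e i)"
    using dep[OF i] by blast
  have "\<delta> \<noteq> 0"
  proof
    assume "\<delta> = 0"
    then have "act \<gamma> (e 0) = 0" using gd(4) act_zero_sc[OF e_M[OF i]] by simp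
    moreover have "\<gamma> \<noteq> 0" using gd(3) \<open>\<delta> = 0\<close> by simp
    ultimately show False using torsion[OF gd(1) _ e_M[OF n_pos]] e_nz by blast
  qed
  have "inverse \<delta> \<in> L" using subfield_inverse[OF Lsf] GL gd(2) by blast
  then obtain N :: int where N: "N > 0" "of_int N * inverse \<delta> \<in> \<Gamma>" using order_denom[OF ord] by blast
  define \<delta>1 where "\<delta>1 = of_int N * inverse \<delta>"
  have d1: "\<delta>1 \<in> \<Gamma>" using N unfolding \<delta>1_def by simp
  have "\<delta>1 * \<delta> = of_int N" unfolding \<delta>1_def using \<open>\<delta> \<noteq> 0\<close> by (simp add: field_simps)
  then have "(\<lambda>j. of_int N * e i j) = act (\<delta>1 * \<delta>) (e i)" using act_int[OF e_M[OF i]] by simp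
  also have "\<dots> = act \<delta>1 (act \<gamma> (e 0))" using act_mult[OF d1 gd(2) e_M[OF i]] gd(4) by simp
  also have "\<dots> = act (\<delta>1 * \<gamma>) (e 0)" using act_mult[OF d1 gd(1) e_M[OF n_pos]] by simp
  finally show ?thesis using N(1) subring_mult[OF Gsub d1 gd(1)] by blast
qed

lemma K1_uniform: "\<exists>N::int. N > 0 \<and> (\<forall>i\<in>{..<n}. \<exists>\<gamma>\<in>\<Gamma>. (\<lambda>j. of_int N * e i j) = act \<gamma> (e 0))"
proof (rule common_mult)
  show "finite {..<n}" by simp
next
  fix i assume "i \<in> {..<n}"
  then show "\<exists>N::int. N > 0 \<and> (\<exists>\<gamma>\<in>\<Gamma>. (\<lambda>j. of_int N * e i j) = act \<gamma> (e 0))" using K1 by simp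
next
  fix i N and k :: int assume "\<exists>\<gamma>\<in>\<Gamma>. (\<lambda>j. of_int N * e i j) = act \<gamma> (e 0)" "k > 0"
  then obtain \<gamma> where g: "\<gamma> \<in> \<Gamma>" "(\<lambda>j. of_int N * e i j) = act \<gamma> (e 0)" by blast
  have "act (of_int k * \<gamma>) (e 0) = act (of_int k) (act \<gamma> (e 0))"
    using act_mult[OF G_int g(1) e_M[OF n_pos]] by simp
  also have "\<dots> = (\<lambda>j. of_int k * act \<gamma> (e 0) j)" using act_int act_closed[OF g(1) e_M[OF n_pos]] by blast
  also have "\<dots> = (\<lambda>j. of_int (k * N) * e i j)" unfolding g(2)[symmetric] by (simp add: mult.assoc)
  finally show "\<exists>\<gamma>\<in>\<Gamma>. (\<lambda>j. of_int (k * N) * e i j) = act \<gamma> (e 0)"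
    using subring_mult[OF Gsub G_int g(1)] by metis
qed

lemma uniform_m: "\<exists>m::int. m > 0 \<and> (\<forall>w\<in>M. \<exists>\<gamma>\<in>\<Gamma>. (\<lambda>j. of_int m * w j) = act \<gamma> (e 0))"
proof -
  obtain N :: int where N: "N > 0" "\<forall>i\<in>{..<n}. \<exists>\<gamma>\<in>\<Gamma>. (\<lambda>j. of_int N * e i j) = act \<gamma> (e 0)"
    using K1_uniform by blast
  define gs where "gs i = (SOME \<gamma>. \<gamma> \<in> \<Gamma> \<and> (\<lambda>j. of_int N * e i j) = act \<gamma> (e 0))" for i
  have gs: "gs i \<in> \<Gamma>" "(\<lambda>j. of_int N * e i j) = act (gs i) (e 0)" if "i < n" for i
  proof -
    have "\<exists>\<gamma>. \<gamma> \<in> \<Gamma> \<and> (\<lambda>j. of_int N * e i j) = act \<gamma> (e 0)" using N(2) that by auto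
    from someI_ex[OF this] show "gs i \<in> \<Gamma>" "(\<lambda>j. of_int N * e i j) = act (gs i) (e 0)"
      unfolding gs_def by auto
  qed
  have e0: "e 0 \<in> M" using e_M[OF n_pos] .
  have "\<forall>w\<in>M. \<exists>\<gamma>\<in>\<Gamma>. (\<lambda>j. of_int (z * N) * w j) = act \<gamma> (e 0)"
  proof
    fix w assume w: "w \<in> M"
    define r where "r t = of_int z * w t" for t
    have rO: "r t \<in> O'" if "t < n" for t using O'_gen w that unfolding r_def by (auto simp: M_mem)
    have rG: "\<phi> (r t) * gs t \<in> \<Gamma>" if "t < n" for t
      using subring_mult[OF Gsub O'_phi[OF rO[OF that]] gs(1)[OF that]] .
    have trm: "(\<lambda>j. if j = t then of_int (z * N) * w t else 0) = act (\<phi> (r t) * gs t) (e 0)"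
      if t: "t < n" for t
    proof -
      have NM: "(\<lambda>j. of_int N * e t j) \<in> M" using gs(2)[OF t] act_closed[OF gs(1)[OF t] e0] by simp
      have "act (\<phi> (r t) * gs t) (e 0) = act (\<phi> (r t)) (act (gs t) (e 0))"
        using act_mult[OF O'_phi[OF rO[OF t]] gs(1)[OF t] e0] .
      also have "\<dots> = act (\<phi> (r t)) (\<lambda>j. of_int N * e t j)" using gs(2)[OF t] by simp
      also have "\<dots> = (\<lambda>j. r t * (of_int N * e t j))" using act_O'[OF rO[OF t] NM] .
      also have "\<dots> = (\<lambda>j. if j = t then of_int (z * N) * w t else 0)"
        unfolding r_def e_def by (auto simp: fun_eq_iff)
      finally show ?thesis by simp
    qed
    have "(\<lambda>j. of_int (z * N) * w j) = (\<Sum>t<n. (\<lambda>j. if j = t then of_int (z * N) * w t else 0))"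
    proof
      fix j
      show "of_int (z * N) * w j = (\<Sum>t<n. (\<lambda>j. if j = t then of_int (z * N) * w t else 0)) j"
        unfolding sum_fun_apply using w by (auto simp: M_mem sum.delta')
    qed
    also have "\<dots> = (\<Sum>t<n. act (\<phi> (r t) * gs t) (e 0))"
      by (rule sum.cong[OF refl]) (use trm in simp)
    also have "\<dots> = act (\<Sum>t<n. \<phi> (r t) * gs t) (e 0)"
    proof -
      have "\<And>s. s \<in> {..<n} \<Longrightarrow> \<phi> (r s) * gs s \<in> \<Gamma>" using rG by simp
      from act_sum[OF e0 this] show ?thesis by (rule sym)
    qed
    finally have "(\<lambda>j. of_int (z * N) * w j) = act (\<Sum>t<n. \<phi> (r t) * gs t) (e 0)" .
    moreover have "(\<Sum>t<n. \<phi> (r t) * gs t) \<in> \<Gamma>" by (rule subring_sum[OF Gsub]) (use rG in simp)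
    ultimately show "\<exists>\<gamma>\<in>\<Gamma>. (\<lambda>j. of_int (z * N) * w j) = act \<gamma> (e 0)" by blast
  qed
  then show ?thesis using N(1) zpos by (intro exI[of _ "z * N"]) simp
qed

end

context setting begin

lemma ideal_exists:
  "\<exists>h. inj_on h M \<and> fractional_ideal \<Gamma> L (h ` M) \<and> (\<forall>w\<in>M. \<forall>w'\<in>M. h (w + w') = h w + h w') \<and>
       (\<forall>\<gamma>\<in>\<Gamma>. \<forall>w\<in>M. h (act \<gamma> w) = \<gamma> * h w)"
proof -
  obtain m :: int where m: "m > 0" "\<forall>w\<in>M. \<exists>\<gamma>\<in>\<Gamma>. (\<lambda>j. of_int m * w j) = act \<gamma> (e 0)"
    using uniform_m by blast
  have e0: "e 0 \<in> M" using e_M[OF n_pos] .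
  have uniq: "\<gamma> = \<gamma>'" if "\<gamma> \<in> \<Gamma>" "\<gamma>' \<in> \<Gamma>" "act \<gamma> (e 0) = act \<gamma>' (e 0)" for \<gamma> \<gamma>'
    using act_inj[OF that(1,2) e0 e_nz that(3)] .
  define gam where "gam w = (THE \<gamma>. \<gamma> \<in> \<Gamma> \<and> (\<lambda>j. of_int m * w j) = act \<gamma> (e 0))" for w
  have gam: "gam w \<in> \<Gamma> \<and> (\<lambda>j. of_int m * w j) = act (gam w) (e 0)" if w: "w \<in> M" for w
  proof -
    have "\<exists>!\<gamma>. \<gamma> \<in> \<Gamma> \<and> (\<lambda>j. of_int m * w j) = act \<gamma> (e 0)"
      using m(2) w uniq by metis
    from theI'[OF this] show ?thesis unfolding gam_def .
  qed
  have gam_eq: "gam w = \<gamma>" if "w \<in> M" "\<gamma> \<in> \<Gamma>" "(\<lambda>j. of_int m * w j) = act \<gamma> (e 0)" for w \<gamma>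
    using gam[OF that(1)] uniq that(2,3) by metis
  define h where "h w = gam w / of_int m" for w
  have mnz: "(of_int m :: complex) \<noteq> 0" using m(1) by simp
  have gam_add: "gam (w + w') = gam w + gam w'" if "w \<in> M" "w' \<in> M" for w w'
  proof (rule gam_eq)
    show "w + w' \<in> M" using M_add that .
    show "gam w + gam w' \<in> \<Gamma>" using gam that subring_add[OF Gsub] by blast
    have "(\<lambda>j. of_int m * (w + w') j) = (\<lambda>j. of_int m * w j) + (\<lambda>j. of_int m * w' j)"
      by (simp add: fun_eq_iff algebra_simps)
    also have "\<dots> = act (gam w) (e 0) + act (gam w') (e 0)" using gam that by simp
    also have "\<dots> = act (gam w + gam w') (e 0)" using act_addl[OF _ _ e0] gam that by simp
    finally show "(\<lambda>j. of_int m * (w + w') j) = act (gam w + gam w') (e 0)" .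
  qed
  have gam_act: "gam (act \<gamma> w) = \<gamma> * gam w" if "\<gamma> \<in> \<Gamma>" "w \<in> M" for \<gamma> w
  proof (rule gam_eq)
    show "act \<gamma> w \<in> M" using act_closed that .
    show "\<gamma> * gam w \<in> \<Gamma>" using gam that subring_mult[OF Gsub] by blast
    have "(\<lambda>j. of_int m * act \<gamma> w j) = act \<gamma> (\<lambda>j. of_int m * w j)" using act_comm_int[OF that] by simp
    also have "\<dots> = act \<gamma> (act (gam w) (e 0))" using gam that by simp
    also have "\<dots> = act (\<gamma> * gam w) (e 0)" using act_mult[OF _ _ e0] gam that by simp
    finally show "(\<lambda>j. of_int m * act \<gamma> w j) = act (\<gamma> * gam w) (e 0)" .
  qed
  have gam_e0: "gam (e 0) = of_int m"
    using gam_eq[OF e0 G_int] act_int[OF e0] by simp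
  have gam_0: "gam 0 = 0"
    using gam_eq[OF zero_M subring_0[OF Gsub]] act_zero_sc[OF e0] by (simp add: zero_fun_def)
  have inj: "inj_on h M"
  proof (rule inj_onI)
    fix w w' assume w: "w \<in> M" "w' \<in> M" "h w = h w'"
    then have "gam w = gam w'" unfolding h_def using mnz by simp
    then have "(\<lambda>j. of_int m * w j) = (\<lambda>j. of_int m * w' j)" using gam w by metis
    then show "w = w'" using mnz by (simp add: fun_eq_iff)
  qed
  have h_add: "h (w + w') = h w + h w'" if "w \<in> M" "w' \<in> M" for w w'
    unfolding h_def gam_add[OF that] by (simp add: add_divide_distrib)
  have h_act: "h (act \<gamma> w) = \<gamma> * h w" if "\<gamma> \<in> \<Gamma>" "w \<in> M" for \<gamma> w
    unfolding h_def gam_act[OF that] by simp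
  have mL: "(of_int m :: complex) \<in> L" using subring_of_int[OF Lsr] .
  have frac: "fractional_ideal \<Gamma> L (h ` M)"
    unfolding fractional_ideal_def
  proof (intro conjI)
    show "h ` M \<subseteq> L"
    proof
      fix x assume "x \<in> h ` M"
      then obtain w where "w \<in> M" "x = h w" by blast
      then show "x \<in> L" unfolding h_def using gam GL subfield_divide[OF Lsf _ mL] by blast
    qed
    have "h (e 0) = 1" unfolding h_def gam_e0 using mnz by simp
    then have "1 \<in> h ` M" using e0 by (metis image_eqI)
    then show "h ` M \<noteq> {0}" by (metis singletonD zero_neq_one)
    have "h 0 = 0" unfolding h_def gam_0 by simp
    then show "0 \<in> h ` M" using zero_M by (metis image_eqI)
    show "\<forall>a\<in>h ` M. \<forall>b\<in>h ` M. a + b \<in> h ` M"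
    proof (intro ballI)
      fix a b assume "a \<in> h ` M" "b \<in> h ` M"
      then obtain w w' where ww: "w \<in> M" "w' \<in> M" "a = h w" "b = h w'" by blast
      then have "a + b = h (w + w')" using h_add by simp
      then show "a + b \<in> h ` M" using M_add[OF ww(1,2)] by (rule image_eqI)
    qed
    show "\<forall>g\<in>\<Gamma>. \<forall>a\<in>h ` M. g * a \<in> h ` M"
    proof (intro ballI)
      fix g a assume "g \<in> \<Gamma>" "a \<in> h ` M"
      then obtain w where ww: "w \<in> M" "a = h w" by blast
      then have "g * a = h (act g w)" using h_act \<open>g \<in> \<Gamma>\<close> by simp
      then show "g * a \<in> h ` M" using act_closed[OF \<open>g \<in> \<Gamma>\<close> ww(1)] by (rule image_eqI)
    qed
    have "\<forall>a\<in>h ` M. of_int m * a \<in> \<Gamma>"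
    proof
      fix a assume "a \<in> h ` M"
      then obtain w where "w \<in> M" "a = h w" by blast
      then show "of_int m * a \<in> \<Gamma>" unfolding h_def using gam mnz by simp
    qed
    then have "(\<lambda>a. of_int m * a) ` h ` M \<subseteq> \<Gamma>" by (simp add: image_subset_iff)
    then show "\<exists>x\<in>L. x \<noteq> 0 \<and> (\<lambda>a. x * a) ` h ` M \<subseteq> \<Gamma>" using mL mnz by blast
  qed
  show ?thesis
    by (rule exI[of _ h]) (use inj frac h_add h_act in simp)
qed

end

definition idmod :: "complex set \<Rightarrow> complex cmod" where
  "idmod I = \<lparr>mcarrier = I, madd = (+), mzero = 0, msmul = (*)\<rparr>"

lemma mod_iso_refl: "mod_iso R X X"
  unfolding mod_iso_def by (rule exI[of _ id]) (simp add: bij_betw_id)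

lemma mod_iso_trans:
  assumes "mod_iso R X Y" "mod_iso R Y Z" shows "mod_iso R X Z"
proof -
  obtain f where f: "bij_betw f (mcarrier X) (mcarrier Y)"
    "\<forall>x\<in>mcarrier X. \<forall>y\<in>mcarrier X. f (madd X x y) = madd Y (f x) (f y)"
    "\<forall>r\<in>R. \<forall>x\<in>mcarrier X. f (msmul X r x) = msmul Y r (f x)"
    using assms(1) unfolding mod_iso_def by blast
  obtain g where g: "bij_betw g (mcarrier Y) (mcarrier Z)"
    "\<forall>x\<in>mcarrier Y. \<forall>y\<in>mcarrier Y. g (madd Y x y) = madd Z (g x) (g y)"
    "\<forall>r\<in>R. \<forall>x\<in>mcarrier Y. g (msmul Y r x) = msmul Z r (g x)"
    using assms(2) unfolding mod_iso_def by blast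
  have fin: "f x \<in> mcarrier Y" if "x \<in> mcarrier X" for x using f(1) that bij_betwE by blast
  show ?thesis unfolding mod_iso_def
  proof (intro exI[of _ "g \<circ> f"] conjI ballI)
    show "bij_betw (g \<circ> f) (mcarrier X) (mcarrier Z)" using bij_betw_trans[OF f(1) g(1)] .
    fix x y assume "x \<in> mcarrier X" "y \<in> mcarrier X"
    then show "(g \<circ> f) (madd X x y) = madd Z ((g \<circ> f) x) ((g \<circ> f) y)" using f(2) g(2) fin by simp
  next
    fix r x assume "r \<in> R" "x \<in> mcarrier X"
    then show "(g \<circ> f) (msmul X r x) = msmul Z r ((g \<circ> f) x)" using f(3) g(3) fin by simp
  qed
qed

lemma mod_iso_sym:
  assumes cl: "\<forall>x\<in>mcarrier X. \<forall>y\<in>mcarrier X. madd X x y \<in> mcarrier X"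
    "\<forall>r\<in>R. \<forall>x\<in>mcarrier X. msmul X r x \<in> mcarrier X"
    and iso: "mod_iso R X Y" shows "mod_iso R Y X"
proof -
  obtain f where f: "bij_betw f (mcarrier X) (mcarrier Y)"
    "\<forall>x\<in>mcarrier X. \<forall>y\<in>mcarrier X. f (madd X x y) = madd Y (f x) (f y)"
    "\<forall>r\<in>R. \<forall>x\<in>mcarrier X. f (msmul X r x) = msmul Y r (f x)"
    using iso unfolding mod_iso_def by blast
  define f' where "f' = inv_into (mcarrier X) f"
  have f'in: "f' a \<in> mcarrier X" and ff': "f (f' a) = a" if "a \<in> mcarrier Y" for a
  proof -
    have "f ` mcarrier X = mcarrier Y" using bij_betw_imp_surj_on[OF f(1)] .
    then show "f' a \<in> mcarrier X" "f (f' a) = a" using that f(1) unfolding f'_def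
      by (auto simp: bij_betw_inv_into_right intro: inv_into_into)
  qed
  have f'f: "f' (f x) = x" if "x \<in> mcarrier X" for x
    using that f(1) unfolding f'_def by (simp add: bij_betw_inv_into_left)
  show ?thesis unfolding mod_iso_def
  proof (intro exI[of _ f'] conjI ballI)
    show "bij_betw f' (mcarrier Y) (mcarrier X)" unfolding f'_def using bij_betw_inv_into[OF f(1)] .
    fix a b assume ab: "a \<in> mcarrier Y" "b \<in> mcarrier Y"
    have "madd Y a b = f (madd X (f' a) (f' b))" using f(2) f'in ff' ab by simp
    then show "f' (madd Y a b) = madd X (f' a) (f' b)" using f'f cl(1) f'in ab by simp
  next
    fix r a assume ra: "r \<in> R" "a \<in> mcarrier Y"
    have "msmul Y r a = f (msmul X r (f' a))" using f(3) f'in ff' ra by simp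
    then show "f' (msmul Y r a) = msmul X r (f' a)" using f'f cl(2) f'in ra by simp
  qed
qed

lemma is_module_closed:
  assumes "is_module R X"
  shows "\<forall>x\<in>mcarrier X. \<forall>y\<in>mcarrier X. madd X x y \<in> mcarrier X"
    "\<forall>r\<in>R. \<forall>x\<in>mcarrier X. msmul X r x \<in> mcarrier X"
  using assms unfolding is_module_def by auto

lemma core:
  fixes X :: "'m cmod"
  assumes nf: "number_field L" and ord: "is_order \<Gamma> L" and sf: "is_subfield K" and KL: "K \<subseteq> L"
    and deg: "field_degree K L n" and mor: "ring_morphism_on K L \<phi>" and zpos: "z > 0"
    and phiz: "\<forall>a\<in>ring_of_integers K. \<phi> (of_int z * a) \<in> \<Gamma>"
    and XJ: "X \<in> J_modules K \<phi> \<Gamma> n z"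
  shows "\<exists>I. fractional_ideal \<Gamma> L I \<and> mod_iso \<Gamma> X (idmod I)"
proof -
  let ?OK = "ring_of_integers K"
  let ?O' = "gen_subring ((\<lambda>a. of_int z * a) ` ring_of_integers K)"
  let ?M = "mcarrier (free_power (ring_of_integers K) n)"
  let ?C = "mcarrier X"
  have modX: "is_module \<Gamma> X" and iso: "mod_iso ?O' (restrict_scalars \<phi> X) (free_power ?OK n)"
    using XJ unfolding J_modules_def Let_def by auto
  obtain g where g: "bij_betw g ?C ?M"
    "\<forall>x\<in>?C. \<forall>y\<in>?C. g (madd X x y) = (\<lambda>i. g x i + g y i)"
    "\<forall>r\<in>?O'. \<forall>x\<in>?C. g (msmul X (\<phi> r) x) = (\<lambda>i. r * g x i)"
    using iso unfolding mod_iso_def restrict_scalars_def by (auto simp: free_power_def)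
  have cl_add: "madd X x y \<in> ?C" if "x \<in> ?C" "y \<in> ?C" for x y
    using modX that unfolding is_module_def by auto
  have cl_sm: "msmul X r x \<in> ?C" if "r \<in> \<Gamma>" "x \<in> ?C" for r x
    using modX that unfolding is_module_def by auto
  have sm_add: "msmul X r (madd X x y) = madd X (msmul X r x) (msmul X r y)" if "r \<in> \<Gamma>" "x \<in> ?C" "y \<in> ?C" for r x y
    using modX that unfolding is_module_def by auto
  have sm_addl: "msmul X (r + s) x = madd X (msmul X r x) (msmul X s x)" if "r \<in> \<Gamma>" "s \<in> \<Gamma>" "x \<in> ?C" for r s x
    using modX that unfolding is_module_def by auto
  have sm_mult: "msmul X (r * s) x = msmul X r (msmul X s x)" if "r \<in> \<Gamma>" "s \<in> \<Gamma>" "x \<in> ?C" for r s x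
    using modX that unfolding is_module_def by auto
  define gi where "gi = inv_into ?C g"
  have gi_in: "gi w \<in> ?C" and g_gi: "g (gi w) = w" if "w \<in> ?M" for w
  proof -
    have "g ` ?C = ?M" using bij_betw_imp_surj_on[OF g(1)] .
    then show "gi w \<in> ?C" "g (gi w) = w" using that g(1) unfolding gi_def
      by (auto simp: bij_betw_inv_into_right intro: inv_into_into)
  qed
  have gi_g: "gi (g x) = x" if "x \<in> ?C" for x
    using that g(1) unfolding gi_def by (simp add: bij_betw_inv_into_left)
  have g_in: "g x \<in> ?M" if "x \<in> ?C" for x using g(1) that bij_betwE by blast
  have g_add: "g (madd X x y) = g x + g y" if "x \<in> ?C" "y \<in> ?C" for x y
    using g(2) that by (simp add: fun_eq_iff)
  define act where "act \<gamma> w = g (msmul X \<gamma> (gi w))" for \<gamma> w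
  have gi_add: "gi (w + w') = madd X (gi w) (gi w')" if "w \<in> ?M" "w' \<in> ?M" for w w'
  proof -
    have "w + w' = g (madd X (gi w) (gi w'))" using g_add gi_in g_gi that by simp
    then show ?thesis using gi_g cl_add gi_in that by simp
  qed
  interpret S: setting L K \<Gamma> \<phi> n z act
  proof (unfold_locales)
    show "number_field L" "is_order \<Gamma> L" "is_subfield K" "K \<subseteq> L" "field_degree K L n"
      "ring_morphism_on K L \<phi>" "z > 0" "\<forall>a\<in>ring_of_integers K. \<phi> (of_int z * a) \<in> \<Gamma>"
      using assms by auto
  next
    fix w w' assume "w \<in> ?M" "w' \<in> ?M"
    then show "w + w' \<in> ?M" using g_add gi_in g_gi cl_add g_in by metis
  next
    fix \<gamma> w assume "\<gamma> \<in> \<Gamma>" "w \<in> ?M"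
    then show "act \<gamma> w \<in> ?M" unfolding act_def using g_in cl_sm gi_in by blast
  next
    fix \<gamma> w w' assume a: "\<gamma> \<in> \<Gamma>" "w \<in> ?M" "w' \<in> ?M"
    then show "act \<gamma> (w + w') = act \<gamma> w + act \<gamma> w'"
      unfolding act_def using gi_add sm_add g_add cl_sm gi_in by simp
  next
    fix \<gamma> \<delta> w assume a: "\<gamma> \<in> \<Gamma>" "\<delta> \<in> \<Gamma>" "w \<in> ?M"
    then show "act (\<gamma> + \<delta>) w = act \<gamma> w + act \<delta> w"
      unfolding act_def using sm_addl g_add cl_sm gi_in by simp
  next
    fix \<gamma> \<delta> w assume a: "\<gamma> \<in> \<Gamma>" "\<delta> \<in> \<Gamma>" "w \<in> ?M"
    then show "act (\<gamma> * \<delta>) w = act \<gamma> (act \<delta> w)"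
      unfolding act_def using sm_mult gi_g cl_sm gi_in by simp
  next
    fix r w assume a: "r \<in> ?O'" "w \<in> ?M"
    then show "act (\<phi> r) w = (\<lambda>i. r * w i)"
      unfolding act_def using g(3) gi_in g_gi by simp
  qed
  obtain h where h: "inj_on h ?M" "fractional_ideal \<Gamma> L (h ` ?M)"
    "\<forall>w\<in>?M. \<forall>w'\<in>?M. h (w + w') = h w + h w'" "\<forall>\<gamma>\<in>\<Gamma>. \<forall>w\<in>?M. h (act \<gamma> w) = \<gamma> * h w"
    using S.ideal_exists by blast
  have "mod_iso \<Gamma> X (idmod (h ` ?M))"
    unfolding mod_iso_def idmod_def
  proof (intro exI[of _ "h \<circ> g"] conjI ballI)
    show "bij_betw (h \<circ> g) ?C (mcarrier \<lparr>mcarrier = h ` ?M, madd = (+), mzero = 0, msmul = (*)\<rparr>)"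
      using bij_betw_trans[OF g(1) inj_on_imp_bij_betw[OF h(1)]] by simp
  next
    fix x y assume "x \<in> ?C" "y \<in> ?C"
    then show "(h \<circ> g) (madd X x y) = madd \<lparr>mcarrier = h ` ?M, madd = (+), mzero = 0, msmul = (*)\<rparr> ((h \<circ> g) x) ((h \<circ> g) y)"
      using g_add h(3) g_in by simp
  next
    fix r x assume a: "r \<in> \<Gamma>" "x \<in> ?C"
    have "act r (g x) = g (msmul X r x)" unfolding act_def using gi_g a by simp
    then show "(h \<circ> g) (msmul X r x) = msmul \<lparr>mcarrier = h ` ?M, madd = (+), mzero = 0, msmul = (*)\<rparr> r ((h \<circ> g) x)"
      using h(4) a g_in by (metis comp_apply cmod.select_convs(4))
  qed
  then show ?thesis using h(2) by blast
qed

lemma idmod_iso: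
  assumes "x \<noteq> 0" "I' = (\<lambda>a. x * a) ` I"
  shows "mod_iso R (idmod I) (idmod I')"
  unfolding mod_iso_def idmod_def
proof (intro exI[of _ "\<lambda>a. x * a"] conjI ballI)
  show "bij_betw (\<lambda>a. x * a) (mcarrier \<lparr>mcarrier = I, madd = (+), mzero = 0, msmul = (*)\<rparr>)
     (mcarrier \<lparr>mcarrier = I', madd = (+), mzero = 0, msmul = (*)\<rparr>)"
    using assms by (auto simp: bij_betw_def inj_on_def)
qed (auto simp: algebra_simps)

theorem lemma10p6:
  fixes L K \<Gamma> :: "complex set" and \<phi> :: "complex \<Rightarrow> complex" and n :: nat and z :: int
  assumes "number_field L"
    and "is_order \<Gamma> L"
    and "is_subfield K" and "K \<subseteq> L"
    and "field_degree K L n"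
    and "ring_morphism_on K L \<phi>"
    and "z > 0" and "\<forall>a\<in>ring_of_integers K. \<phi> (of_int z * a) \<in> \<Gamma>"
  shows "\<exists>f. inj_on f (J_phi K \<phi> \<Gamma> n z :: 'm cmod set set) \<and>
             f ` (J_phi K \<phi> \<Gamma> n z :: 'm cmod set set) \<subseteq> C_Gamma \<Gamma> L"
proof -
  let ?J = "J_modules K \<phi> \<Gamma> n z :: 'm cmod set"
  let ?RJ = "{(X, Y). X \<in> ?J \<and> Y \<in> ?J \<and> mod_iso \<Gamma> X Y}"
  let ?RC = "{(I, I'). fractional_ideal \<Gamma> L I \<and> fractional_ideal \<Gamma> L I' \<and>
               (\<exists>x\<in>L. x \<noteq> 0 \<and> I' = (\<lambda>a. x * a) ` I)}"
  have Jphi: "(J_phi K \<phi> \<Gamma> n z :: 'm cmod set set) = ?J // ?RJ" unfolding J_phi_def ..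
  have CG: "C_Gamma \<Gamma> L = {I. fractional_ideal \<Gamma> L I} // ?RC" unfolding C_Gamma_def ..
  have modJ: "is_module \<Gamma> X" if "X \<in> ?J" for X
    using that unfolding J_modules_def Let_def by auto
  have eqJ: "equiv ?J ?RJ"
  proof (rule equivI)
    show "refl_on ?J ?RJ" by (rule refl_onI) (auto simp: mod_iso_refl)
    show "sym ?RJ"
    proof (rule symI)
      fix a b assume "(a, b) \<in> ?RJ"
      then have ab: "a \<in> ?J" "b \<in> ?J" "mod_iso \<Gamma> a b" by auto
      have "mod_iso \<Gamma> b a" using mod_iso_sym[OF is_module_closed[OF modJ[OF ab(1)]] ab(3)] .
      then show "(b, a) \<in> ?RJ" using ab by simp
    qed
    show "trans ?RJ" by (rule transI) (auto intro: mod_iso_trans)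
    show "?RJ \<subseteq> ?J \<times> ?J" by auto
  qed
  define rep where "rep c = (SOME X. X \<in> c)" for c :: "'m cmod set"
  define Ic where "Ic c = (SOME I. fractional_ideal \<Gamma> L I \<and> mod_iso \<Gamma> (rep c) (idmod I))" for c
  define F where "F c = ?RC `` {Ic c}" for c
  have rep: "rep c \<in> c" "rep c \<in> ?J" if cq: "c \<in> ?J // ?RJ" for c
  proof -
    obtain X0 where X0: "c = ?RJ `` {X0}" "X0 \<in> ?J" using cq by (rule quotientE)
    have "X0 \<in> c" using X0 mod_iso_refl by auto
    then show "rep c \<in> c" unfolding rep_def by (rule someI)
    then show "rep c \<in> ?J" using X0 by auto
  qed
  have Ic: "fractional_ideal \<Gamma> L (Ic c) \<and> mod_iso \<Gamma> (rep c) (idmod (Ic c))" if "c \<in> ?J // ?RJ" for c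
  proof -
    have "\<exists>I. fractional_ideal \<Gamma> L I \<and> mod_iso \<Gamma> (rep c) (idmod I)"
      using core[OF assms rep(2)[OF that]] .
    then show ?thesis unfolding Ic_def by (rule someI_ex)
  qed
  have idmod_closed: "\<forall>x\<in>mcarrier (idmod I). \<forall>y\<in>mcarrier (idmod I). madd (idmod I) x y \<in> mcarrier (idmod I)"
    "\<forall>r\<in>\<Gamma>. \<forall>x\<in>mcarrier (idmod I). msmul (idmod I) r x \<in> mcarrier (idmod I)"
    if "fractional_ideal \<Gamma> L I" for I
    using that unfolding idmod_def fractional_ideal_def by auto
  show ?thesis
  proof (intro exI[of _ F] conjI)
    show "F ` (J_phi K \<phi> \<Gamma> n z :: 'm cmod set set) \<subseteq> C_Gamma \<Gamma> L"
    proof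
      fix y assume "y \<in> F ` (J_phi K \<phi> \<Gamma> n z :: 'm cmod set set)"
      then obtain c where c: "c \<in> ?J // ?RJ" "y = F c" using Jphi by auto
      have "Ic c \<in> {I. fractional_ideal \<Gamma> L I}" using Ic[OF c(1)] by simp
      then show "y \<in> C_Gamma \<Gamma> L" unfolding CG c(2) F_def by (rule quotientI)
    qed
    show "inj_on F (J_phi K \<phi> \<Gamma> n z :: 'm cmod set set)"
    proof (rule inj_onI)
      fix c1 c2 assume c1: "c1 \<in> (J_phi K \<phi> \<Gamma> n z :: 'm cmod set set)"
        and c2: "c2 \<in> (J_phi K \<phi> \<Gamma> n z :: 'm cmod set set)" and eq: "F c1 = F c2"
      have c1': "c1 \<in> ?J // ?RJ" and c2': "c2 \<in> ?J // ?RJ" using c1 c2 Jphi by auto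
      have f1: "fractional_ideal \<Gamma> L (Ic c1)" and i1: "mod_iso \<Gamma> (rep c1) (idmod (Ic c1))"
        using Ic[OF c1'] by auto
      have f2: "fractional_ideal \<Gamma> L (Ic c2)" and i2: "mod_iso \<Gamma> (rep c2) (idmod (Ic c2))"
        using Ic[OF c2'] by auto
      have oneL: "1 \<in> L" using assms(1) unfolding number_field_def is_subfield_def is_subring_def by auto
      have "Ic c2 \<in> F c2" unfolding F_def using f2 oneL by (auto intro!: bexI[of _ 1])
      then have "Ic c2 \<in> F c1" using eq by simp
      then obtain x where x: "x \<in> L" "x \<noteq> 0" "Ic c2 = (\<lambda>a. x * a) ` Ic c1" unfolding F_def by auto
      have "mod_iso \<Gamma> (idmod (Ic c1)) (idmod (Ic c2))" using idmod_iso[OF x(2,3)] .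
      then have "mod_iso \<Gamma> (rep c1) (idmod (Ic c2))" using mod_iso_trans[OF i1] by blast
      moreover have "mod_iso \<Gamma> (idmod (Ic c2)) (rep c2)"
        using mod_iso_sym[OF is_module_closed[OF modJ[OF rep(2)[OF c2']]] i2] .
      ultimately have "mod_iso \<Gamma> (rep c1) (rep c2)" by (rule mod_iso_trans)
      then have "(rep c1, rep c2) \<in> ?RJ" using rep c1' c2' by blast
      then show "c1 = c2" using quotient_eq_iff[OF eqJ c1' c2' rep(1)[OF c1'] rep(1)[OF c2']] by blast
    qed
  qed
qed

end
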